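(* Let $N$ be a positive even integer and $\alpha,\beta$ real; put $\sigma=\alpha+\beta$. Define the rational functions $$E_1(x)=\frac{(x+3-\alpha+\beta)(x+3-\sigma)(x-1-2N+\sigma)}{4(x+1)(x+3)},\qquad E_2(x)=-\frac{(x-1+\sigma)(x-1+\alpha-\beta)(x-1+2N-\sigma)}{4(x-1)(x-3)},$$ $$G_1(x)=\frac{(\alpha^2-\beta^2)(x+\sigma-2N-1)}{(x^2-1)(x+3)},\qquad G_2(x)=\frac{(2N+2-\sigma)\big((x+\alpha-1)^2-\beta^2\big)}{(x^2-1)(x-3)},$$ and the operator $$(Hf)(x)=E_1(x)\big(f(x+4)-f(x)\big)+E_2(x)\big(f(x-4)-f(x)\big)+G_1(x)\big(f(-x-2)-f(x)\big)+G_2(x)\big(f(-x+2)-f(x)\big).$$ Then for every $n\in\{0,1,\dots,N\}$ the monic dual $-1$ Hahn polynomial $P_n$ satisfies $(HP_n)(x)=2n\,P_n(x)$ for all $x\notin\{\pm1,\pm3\}$ (in particular $HP_n$ is a polynomial of degree $n$).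
   Context: For $N$ even: $b_n^{(-1)}=2N+1-\sigma$ for $n$ even, $b_n^{(-1)}=-2N-3+\sigma$ for $n$ odd; $u_n^{(-1)}=4n(\alpha-n)$ for $n$ even, $u_n^{(-1)}=4(N-n+1)(n+\beta-N-1)$ for $n$ odd. The monic dual $-1$ Hahn polynomials are defined by $P_{-1}=0$, $P_0=1$, $P_{n+1}(x)=(x-b_n^{(-1)})P_n(x)-u_n^{(-1)}P_{n-1}(x)$ for $n\ge0$. *)

theory Defs
  imports Complex_Main "HOL-Computational_Algebra.Polynomial"
begin

text \<open>Recurrence coefficients of the dual -1 Hahn polynomials, case N even;
  sigma = alpha + beta.\<close>

definition hb :: "nat \<Rightarrow> real \<Rightarrow> real \<Rightarrow> nat \<Rightarrow> real" where
  "hb N \<alpha> \<beta> n = (if even n then 2 * real N + 1 - (\<alpha> + \<beta>)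
                     else - 2 * real N - 3 + (\<alpha> + \<beta>))"

definition hu :: "nat \<Rightarrow> real \<Rightarrow> real \<Rightarrow> nat \<Rightarrow> real" where
  "hu N \<alpha> \<beta> n = (if even n then 4 * real n * (\<alpha> - real n)
                     else 4 * (real N - real n + 1) * (real n + \<beta> - real N - 1))"

fun hahnP :: "nat \<Rightarrow> real \<Rightarrow> real \<Rightarrow> nat \<Rightarrow> real poly" where
  "hahnP N \<alpha> \<beta> 0 = 1"
| "hahnP N \<alpha> \<beta> (Suc 0) = [:- hb N \<alpha> \<beta> 0, 1:]"
| "hahnP N \<alpha> \<beta> (Suc (Suc n)) =
     [:- hb N \<alpha> \<beta> (Suc n), 1:] * hahnP N \<alpha> \<beta> (Suc n)
     - smult (hu N \<alpha> \<beta> (Suc n)) (hahnP N \<alpha> \<beta> n)"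

definition E1 :: "nat \<Rightarrow> real \<Rightarrow> real \<Rightarrow> real \<Rightarrow> real" where
  "E1 N \<alpha> \<beta> x = (x + 3 - \<alpha> + \<beta>) * (x + 3 - (\<alpha> + \<beta>)) * (x - 1 - 2 * real N + (\<alpha> + \<beta>))
                   / (4 * (x + 1) * (x + 3))"

definition E2 :: "nat \<Rightarrow> real \<Rightarrow> real \<Rightarrow> real \<Rightarrow> real" where
  "E2 N \<alpha> \<beta> x = - ((x - 1 + (\<alpha> + \<beta>)) * (x - 1 + \<alpha> - \<beta>) * (x - 1 + 2 * real N - (\<alpha> + \<beta>))
                   / (4 * (x - 1) * (x - 3)))"

definition G1 :: "nat \<Rightarrow> real \<Rightarrow> real \<Rightarrow> real \<Rightarrow> real" where
  "G1 N \<alpha> \<beta> x = (\<alpha>\<^sup>2 - \<beta>\<^sup>2) * (x + (\<alpha> + \<beta>) - 2 * real N - 1) / ((x\<^sup>2 - 1) * (x + 3))"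

definition G2 :: "nat \<Rightarrow> real \<Rightarrow> real \<Rightarrow> real \<Rightarrow> real" where
  "G2 N \<alpha> \<beta> x = (2 * real N + 2 - (\<alpha> + \<beta>)) * ((x + \<alpha> - 1)\<^sup>2 - \<beta>\<^sup>2) / ((x\<^sup>2 - 1) * (x - 3))"

definition hahnH :: "nat \<Rightarrow> real \<Rightarrow> real \<Rightarrow> (real \<Rightarrow> real) \<Rightarrow> real \<Rightarrow> real" where
  "hahnH N \<alpha> \<beta> f x =
     E1 N \<alpha> \<beta> x * (f (x + 4) - f x) + E2 N \<alpha> \<beta> x * (f (x - 4) - f x)
   + G1 N \<alpha> \<beta> x * (f (- x - 2) - f x) + G2 N \<alpha> \<beta> x * (f (- x + 2) - f x)"

end

theory Submission
  imports Defs
begin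

locale hh = fixes N :: nat and \<alpha> \<beta> :: real
begin

definition bi :: "int \<Rightarrow> real" where
  "bi i = (if even i then 2 * real N + 1 - (\<alpha> + \<beta>) else - 2 * real N - 3 + (\<alpha> + \<beta>))"
definition ui :: "int \<Rightarrow> real" where
  "ui i = (if even i then 4 * of_int i * (\<alpha> - of_int i)
       else 4 * (real N - of_int i + 1) * (of_int i + \<beta> - real N - 1))"

definition Jv :: "(int \<Rightarrow> real) \<Rightarrow> int \<Rightarrow> real" where
  "Jv v i = v (i - 1) + bi i * v i + ui (i + 1) * v (i + 1)"
definition Dv :: "(int \<Rightarrow> real) \<Rightarrow> int \<Rightarrow> real" where
  "Dv v i = 2 * of_int i * v i"
definition ev :: "int \<Rightarrow> int \<Rightarrow> real" where
  "ev m i = (if i = m then 1 else 0)"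

definition Jo :: "int \<Rightarrow> (int \<Rightarrow> real) \<Rightarrow> int \<Rightarrow> real" where
  "Jo m v d = v (d - 1) + bi (m + d) * v d + ui (m + d + 1) * v (d + 1)"
definition Do :: "int \<Rightarrow> (int \<Rightarrow> real) \<Rightarrow> int \<Rightarrow> real" where
  "Do m v d = 2 * of_int (m + d) * v d"
definition dl :: "int \<Rightarrow> real" where "dl d = (if d = 0 then 1 else 0)"

definition FE :: "((int \<Rightarrow> real) \<Rightarrow> int \<Rightarrow> real) \<Rightarrow> ((int \<Rightarrow> real) \<Rightarrow> int \<Rightarrow> real) \<Rightarrow> (int \<Rightarrow> real) \<Rightarrow> int \<Rightarrow> real" where
 "FE J D v i = 64 * D ((J ^^ 1) v) i - 20 * D ((J ^^ 3) v) i + D ((J ^^ 5) v) i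
     - 64 * (J ^^ 1) (D v) i - 4 * (J ^^ 1) (D ((J ^^ 2) v)) i - (J ^^ 1) (D ((J ^^ 4) v)) i
     + 4 * (J ^^ 2) (D ((J ^^ 1) v)) i - 2 * (J ^^ 2) (D ((J ^^ 3) v)) i
     + 20 * (J ^^ 3) (D v) i + 2 * (J ^^ 3) (D ((J ^^ 2) v)) i
     + (J ^^ 4) (D ((J ^^ 1) v)) i - (J ^^ 5) (D v) i"

lemma Jv_shift: "Jv w (m + d) = Jo m (\<lambda>e. w (m + e)) d"
  by (simp add: Jv_def Jo_def add.assoc diff_add_eq add_diff_eq)

lemma Jp_shift: "(Jv ^^ k) w (m + d) = (Jo m ^^ k) (\<lambda>e. w (m + e)) d"
proof (induction k arbitrary: d)
  case 0 then show ?case by simp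
next
  case (Suc k)
  have "(\<lambda>e. (Jv ^^ k) w (m + e)) = (Jo m ^^ k) (\<lambda>e. w (m + e))"
    using Suc by (simp add: fun_eq_iff)
  then show ?case by (simp add: Jv_shift)
qed

lemma Dv_shift: "Dv w (m + d) = Do m (\<lambda>e. w (m + e)) d"
  by (simp add: Dv_def Do_def)

lemma ev_shift: "(\<lambda>e. ev m (m + e)) = dl"
  by (simp add: ev_def dl_def fun_eq_iff)

lemma Dv_shift': "(\<lambda>e. Dv w (m + e)) = Do m (\<lambda>e. w (m + e))"
  by (simp add: Dv_shift fun_eq_iff)
lemma Jp_shift': "(\<lambda>e. (Jv ^^ k) w (m + e)) = (Jo m ^^ k) (\<lambda>e. w (m + e))"
  by (simp add: Jp_shift fun_eq_iff)

lemma FE_shift: "FE Jv Dv (ev m) (m + d) = FE (Jo m) (Do m) dl d"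
  unfolding FE_def Jp_shift Dv_shift Dv_shift' Jp_shift' ev_shift ..

lemma MI_even_m5: "even m \<Longrightarrow> FE (Jo m) (Do m) dl (-5) = 0"
  apply (simp add: FE_def Jo_def Do_def dl_def numeral_eq_Suc bi_def ui_def)
  apply ((thin_tac "even m")?, algebra)?
  done

lemma MI_even_m4: "even m \<Longrightarrow> FE (Jo m) (Do m) dl (-4) = 0"
  apply (simp add: FE_def Jo_def Do_def dl_def numeral_eq_Suc bi_def ui_def)
  apply ((thin_tac "even m")?, algebra)?
  done

lemma MI_even_m3: "even m \<Longrightarrow> FE (Jo m) (Do m) dl (-3) = 0"
  apply (simp add: FE_def Jo_def Do_def dl_def numeral_eq_Suc bi_def ui_def)
  apply ((thin_tac "even m")?, algebra)?
  done

lemma MI_even_m2: "even m \<Longrightarrow> FE (Jo m) (Do m) dl (-2) = 0"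
  apply (simp add: FE_def Jo_def Do_def dl_def numeral_eq_Suc bi_def ui_def)
  apply ((thin_tac "even m")?, algebra)?
  done

lemma MI_even_m1: "even m \<Longrightarrow> FE (Jo m) (Do m) dl (-1) = 0"
  apply (simp add: FE_def Jo_def Do_def dl_def numeral_eq_Suc bi_def ui_def)
  apply ((thin_tac "even m")?, algebra)?
  done

lemma MI_even_0: "even m \<Longrightarrow> FE (Jo m) (Do m) dl 0 = 0"
  apply (simp add: FE_def Jo_def Do_def dl_def numeral_eq_Suc bi_def ui_def)
  apply ((thin_tac "even m")?, algebra)?
  done

lemma MI_even_1: "even m \<Longrightarrow> FE (Jo m) (Do m) dl 1 = 0"
  apply (simp add: FE_def Jo_def Do_def dl_def numeral_eq_Suc bi_def ui_def)
  apply ((thin_tac "even m")?, algebra)?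
  done

lemma MI_even_2: "even m \<Longrightarrow> FE (Jo m) (Do m) dl 2 = 0"
  apply (simp add: FE_def Jo_def Do_def dl_def numeral_eq_Suc bi_def ui_def)
  apply ((thin_tac "even m")?, algebra)?
  done

lemma MI_even_3: "even m \<Longrightarrow> FE (Jo m) (Do m) dl 3 = 0"
  apply (simp add: FE_def Jo_def Do_def dl_def numeral_eq_Suc bi_def ui_def)
  apply ((thin_tac "even m")?, algebra)?
  done

lemma MI_even_4: "even m \<Longrightarrow> FE (Jo m) (Do m) dl 4 = 0"
  apply (simp add: FE_def Jo_def Do_def dl_def numeral_eq_Suc bi_def ui_def)
  apply ((thin_tac "even m")?, algebra)?
  done

lemma MI_even_5: "even m \<Longrightarrow> FE (Jo m) (Do m) dl 5 = 0"
  apply (simp add: FE_def Jo_def Do_def dl_def numeral_eq_Suc bi_def ui_def)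
  apply ((thin_tac "even m")?, algebra)?
  done

lemma MI_odd_m5: "odd m \<Longrightarrow> FE (Jo m) (Do m) dl (-5) = 0"
  apply (simp add: FE_def Jo_def Do_def dl_def numeral_eq_Suc bi_def ui_def)
  apply ((thin_tac "odd m")?, algebra)?
  done

lemma MI_odd_m4: "odd m \<Longrightarrow> FE (Jo m) (Do m) dl (-4) = 0"
  apply (simp add: FE_def Jo_def Do_def dl_def numeral_eq_Suc bi_def ui_def)
  apply ((thin_tac "odd m")?, algebra)?
  done

lemma MI_odd_m3: "odd m \<Longrightarrow> FE (Jo m) (Do m) dl (-3) = 0"
  apply (simp add: FE_def Jo_def Do_def dl_def numeral_eq_Suc bi_def ui_def)
  apply ((thin_tac "odd m")?, algebra)?
  done

lemma MI_odd_m2: "odd m \<Longrightarrow> FE (Jo m) (Do m) dl (-2) = 0"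
  apply (simp add: FE_def Jo_def Do_def dl_def numeral_eq_Suc bi_def ui_def)
  apply ((thin_tac "odd m")?, algebra)?
  done

lemma MI_odd_m1: "odd m \<Longrightarrow> FE (Jo m) (Do m) dl (-1) = 0"
  apply (simp add: FE_def Jo_def Do_def dl_def numeral_eq_Suc bi_def ui_def)
  apply ((thin_tac "odd m")?, algebra)?
  done

lemma MI_odd_0: "odd m \<Longrightarrow> FE (Jo m) (Do m) dl 0 = 0"
  apply (simp add: FE_def Jo_def Do_def dl_def numeral_eq_Suc bi_def ui_def)
  apply ((thin_tac "odd m")?, algebra)?
  done

lemma MI_odd_1: "odd m \<Longrightarrow> FE (Jo m) (Do m) dl 1 = 0"
  apply (simp add: FE_def Jo_def Do_def dl_def numeral_eq_Suc bi_def ui_def)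
  apply ((thin_tac "odd m")?, algebra)?
  done

lemma MI_odd_2: "odd m \<Longrightarrow> FE (Jo m) (Do m) dl 2 = 0"
  apply (simp add: FE_def Jo_def Do_def dl_def numeral_eq_Suc bi_def ui_def)
  apply ((thin_tac "odd m")?, algebra)?
  done

lemma MI_odd_3: "odd m \<Longrightarrow> FE (Jo m) (Do m) dl 3 = 0"
  apply (simp add: FE_def Jo_def Do_def dl_def numeral_eq_Suc bi_def ui_def)
  apply ((thin_tac "odd m")?, algebra)?
  done

lemma MI_odd_4: "odd m \<Longrightarrow> FE (Jo m) (Do m) dl 4 = 0"
  apply (simp add: FE_def Jo_def Do_def dl_def numeral_eq_Suc bi_def ui_def)
  apply ((thin_tac "odd m")?, algebra)?
  done

lemma MI_odd_5: "odd m \<Longrightarrow> FE (Jo m) (Do m) dl 5 = 0"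
  apply (simp add: FE_def Jo_def Do_def dl_def numeral_eq_Suc bi_def ui_def)
  apply ((thin_tac "odd m")?, algebra)?
  done


lemma MI_off: "\<bar>d\<bar> \<le> 5 \<Longrightarrow> FE (Jo m) (Do m) dl d = 0"
proof -
  assume "\<bar>d\<bar> \<le> 5"
  then have "d = -5 \<or> d = -4 \<or> d = -3 \<or> d = -2 \<or> d = -1 \<or> d = 0 \<or> d = 1 \<or> d = 2 \<or> d = 3 \<or> d = 4 \<or> d = 5" by presburger
  then show ?thesis
    by (cases "even m")
      (auto simp add:
         MI_even_m5 MI_even_m4 MI_even_m3 MI_even_m2 MI_even_m1 MI_even_0 MI_even_1 MI_even_2 MI_even_3 MI_even_4 MI_even_5
         MI_odd_m5 MI_odd_m4 MI_odd_m3 MI_odd_m2 MI_odd_m1 MI_odd_0 MI_odd_1 MI_odd_2 MI_odd_3 MI_odd_4 MI_odd_5)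
qed

definition rad :: "(int \<Rightarrow> real) \<Rightarrow> int \<Rightarrow> int \<Rightarrow> bool" where
  "rad v c r \<longleftrightarrow> (\<forall>i. v i \<noteq> 0 \<longrightarrow> c - r \<le> i \<and> i \<le> c + r)"

definition low :: "(int \<Rightarrow> real) \<Rightarrow> bool" where
  "low v \<longleftrightarrow> (\<forall>i<0. v i = 0)"

lemma rad_ev: "rad (ev m) m 0"
  by (simp add: rad_def ev_def)

lemma rad_J: assumes "rad v c r" shows "rad (Jv v) c (r + 1)"
  unfolding rad_def
proof (intro allI impI)
  fix i assume h: "Jv v i \<noteq> 0"
  show "c - (r + 1) \<le> i \<and> i \<le> c + (r + 1)"
  proof (rule ccontr)
    assume "\<not> ?thesis"
    then have "v (i - 1) = 0" "v i = 0" "v (i + 1) = 0"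
      using assms unfolding rad_def by (smt (verit))+
    then show False using h by (simp add: Jv_def)
  qed
qed

lemma rad_Jp: "rad v c r \<Longrightarrow> rad ((Jv ^^ k) v) c (r + int k)"
proof (induction k)
  case 0 then show ?case by simp
next
  case (Suc k)
  then have "rad (Jv ((Jv ^^ k) v)) c (r + int k + 1)" by (intro rad_J) auto
  then show ?case by (simp add: ac_simps)
qed

lemma rad_D: "rad v c r \<Longrightarrow> rad (Dv v) c r"
  by (simp add: rad_def Dv_def)

lemma rad_mono: "rad v c r \<Longrightarrow> r \<le> r' \<Longrightarrow> rad v c r'"
  unfolding rad_def by force

lemma ui0: "ui 0 = 0" by (simp add: ui_def)

lemma low_ev: "0 \<le> m \<Longrightarrow> low (ev m)" by (simp add: low_def ev_def)
lemma low_J: assumes "low v" shows "low (Jv v)"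
  unfolding low_def
proof (intro allI impI)
  fix i :: int assume "i < 0"
  then show "Jv v i = 0"
    using assms ui0 unfolding low_def Jv_def
    by (cases "i = -1") auto
qed
lemma low_Jp: "low v \<Longrightarrow> low ((Jv ^^ k) v)"
  by (induction k) (auto intro: low_J)
lemma low_D: "low v \<Longrightarrow> low (Dv v)" by (simp add: low_def Dv_def)

lemma rad_zero: "rad v c r \<Longrightarrow> r < \<bar>i - c\<bar> \<Longrightarrow> v i = 0"
  unfolding rad_def by force

lemma MI: "FE Jv Dv (ev m) i = 0"
proof (cases "\<bar>i - m\<bar> \<le> 5")
  case True
  have "FE Jv Dv (ev m) i = FE Jv Dv (ev m) (m + (i - m))" by simp
  also have "\<dots> = 0" unfolding FE_shift using MI_off True by blast
  finally show ?thesis .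
next
  case False
  have z: "((Jv ^^ a) (Dv ((Jv ^^ b) (ev m)))) i = 0" if "a + b \<le> 5" for a b
  proof -
    have "rad ((Jv ^^ a) (Dv ((Jv ^^ b) (ev m)))) m (0 + int b + int a)"
      by (intro rad_Jp rad_D rad_ev)
    then show ?thesis using False that by (intro rad_zero) auto
  qed
  have z0: "Dv ((Jv ^^ b) (ev m)) i = 0" if "b \<le> 5" for b
    using z[of 0 b] that by simp
  have z1: "(Jv ^^ a) (Dv (ev m)) i = 0" if "a \<le> 5" for a
    using z[of a 0] that by simp
  show ?thesis unfolding FE_def
    by (simp add: z z0 z1 del: funpow.simps)
qed


definition PP :: "int \<Rightarrow> real \<Rightarrow> real" where
  "PP i x = (if i < 0 then 0 else poly (hahnP N \<alpha> \<beta> (nat i)) x)"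

lemma hb_bi: "hb N \<alpha> \<beta> n = bi (int n)" by (simp add: hb_def bi_def)
lemma hu_ui: "hu N \<alpha> \<beta> n = ui (int n)" by (simp add: hu_def ui_def)

lemma PP_rec: assumes "0 \<le> i" shows "PP (i + 1) x = (x - bi i) * PP i x - ui i * PP (i - 1) x"
proof -
  obtain n where n: "i = int n" using assms nonneg_eq_int by blast
  show ?thesis
  proof (cases n)
    case 0
    then show ?thesis using n by (simp add: PP_def hb_bi ui0)
  next
    case (Suc k)
    have p1: "PP (i + 1) x = poly (hahnP N \<alpha> \<beta> (Suc (Suc k))) x"
      using n Suc by (simp add: PP_def nat_add_distrib)
    have p2: "PP i x = poly (hahnP N \<alpha> \<beta> (Suc k)) x" using n Suc by (simp add: PP_def nat_add_distrib)
    have p3: "PP (i - 1) x = poly (hahnP N \<alpha> \<beta> k) x" using n Suc by (simp add: PP_def)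
    have b: "bi i = hb N \<alpha> \<beta> (Suc k)" "ui i = hu N \<alpha> \<beta> (Suc k)" using n Suc by (simp_all add: hb_bi hu_ui)
    show ?thesis unfolding p1 p2 p3 b by (simp add: algebra_simps)
  qed
qed

lemma PP_rec': "0 \<le> i \<Longrightarrow> x * PP i x = PP (i + 1) x + bi i * PP i x + ui i * PP (i - 1) x"
  using PP_rec[of i x] by (simp add: algebra_simps)

definition SS :: "int set \<Rightarrow> (int \<Rightarrow> real) \<Rightarrow> real \<Rightarrow> real" where
  "SS A v x = (\<Sum>i\<in>A. v i * PP i x)"

lemma SS_sub: assumes "finite A" "C \<subseteq> A" "\<forall>i. v i \<noteq> 0 \<longrightarrow> i \<in> C"
  shows "SS A v x = SS C v x"
  unfolding SS_def using assms by (intro sum.mono_neutral_right) auto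

lemma SS_eq: assumes "finite A" "finite B" "C \<subseteq> A" "C \<subseteq> B" "\<forall>i. v i \<noteq> 0 \<longrightarrow> i \<in> C"
  shows "SS A v x = SS B v x"
  using SS_sub[OF assms(1,3,5)] SS_sub[OF assms(2,4,5)] by simp

lemma SS_rad: assumes "finite A" "finite B" "rad v c r" "{c-r..c+r} \<subseteq> A" "{c-r..c+r} \<subseteq> B"
  shows "SS A v x = SS B v x"
  using assms by (intro SS_eq[where C="{c-r..c+r}"]) (auto simp: rad_def)

lemma sum_shift_up: "(\<Sum>i\<in>{a..b::int}. f i) = (\<Sum>i\<in>{a-1..b-1}. f (i + 1))"
proof -
  have "(\<Sum>i\<in>{a-1..b-1}. f (i + 1)) = (\<Sum>i\<in>(\<lambda>i. i + 1) ` {a-1..b-1}. f i)"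
    by (subst sum.reindex) (auto simp: inj_on_def)
  also have "(\<lambda>i. i + 1) ` {a-1..b-1} = {a..b}" by simp
  finally show ?thesis by simp
qed

lemma sum_shift_down: "(\<Sum>i\<in>{a..b::int}. f i) = (\<Sum>i\<in>{a+1..b+1}. f (i - 1))"
proof -
  have "(\<Sum>i\<in>{a+1..b+1}. f (i - 1)) = (\<Sum>i\<in>(\<lambda>i. i + (-1)) ` {a+1..b+1}. f i)"
    by (subst sum.reindex) (auto simp: inj_on_def)
  also have "(\<lambda>i. i + (-1)) ` {a+1..b+1} = {a..b}" by simp
  finally show ?thesis by simp
qed

lemma XL0: assumes "low v" "rad v c r"
  shows "x * SS {c-r..c+r} v x = SS {c-r-1..c+r+1} (Jv v) x"
proof -
  let ?C = "{c-r..c+r}" and ?B = "{c-r-1..c+r+1}"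
  have vz: "v i = 0" if "i \<notin> ?C" for i using assms(2) that unfolding rad_def by force
  have T1: "(\<Sum>i\<in>?B. v (i - 1) * PP i x) = (\<Sum>i\<in>?C. v i * PP (i + 1) x)"
  proof -
    have "(\<Sum>i\<in>?B. v (i - 1) * PP i x) = (\<Sum>i\<in>{c-r-1-1..c+r+1-1}. v i * PP (i + 1) x)"
      by (subst sum_shift_up) simp
    also have "\<dots> = (\<Sum>i\<in>?C. v i * PP (i + 1) x)"
      by (intro sum.mono_neutral_right) (auto simp: vz)
    finally show ?thesis .
  qed
  have T2: "(\<Sum>i\<in>?B. bi i * v i * PP i x) = (\<Sum>i\<in>?C. bi i * v i * PP i x)"
    by (intro sum.mono_neutral_right) (auto simp: vz)
  have T3: "(\<Sum>i\<in>?B. ui (i + 1) * v (i + 1) * PP i x) = (\<Sum>i\<in>?C. ui i * v i * PP (i - 1) x)"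
  proof -
    have "(\<Sum>i\<in>?B. ui (i + 1) * v (i + 1) * PP i x) = (\<Sum>i\<in>{c-r-1+1..c+r+1+1}. ui i * v i * PP (i - 1) x)"
      by (subst sum_shift_down) simp
    also have "\<dots> = (\<Sum>i\<in>?C. ui i * v i * PP (i - 1) x)"
      by (intro sum.mono_neutral_right) (auto simp: vz)
    finally show ?thesis .
  qed
  have L: "x * SS ?C v x = (\<Sum>i\<in>?C. v i * PP (i + 1) x + bi i * v i * PP i x + ui i * v i * PP (i - 1) x)"
    unfolding SS_def sum_distrib_left
  proof (rule sum.cong)
    fix i assume "i \<in> ?C"
    show "x * (v i * PP i x) = v i * PP (i + 1) x + bi i * v i * PP i x + ui i * v i * PP (i - 1) x"
    proof (cases "v i = 0")
      case True then show ?thesis by simp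
    next
      case False
      then have "0 \<le> i" using assms(1) unfolding low_def by force
      have "x * (v i * PP i x) = v i * (x * PP i x)" by (simp add: ac_simps)
      also have "\<dots> = v i * (PP (i+1) x + bi i * PP i x + ui i * PP (i-1) x)"
        using PP_rec' \<open>0 \<le> i\<close> by simp
      finally show ?thesis by (simp add: algebra_simps)
    qed
  qed simp
  have R: "SS ?B (Jv v) x = (\<Sum>i\<in>?B. v (i - 1) * PP i x) + (\<Sum>i\<in>?B. bi i * v i * PP i x)
      + (\<Sum>i\<in>?B. ui (i + 1) * v (i + 1) * PP i x)"
    unfolding SS_def Jv_def by (simp add: sum.distrib algebra_simps)
  show ?thesis unfolding L R T1 T2 T3 by (simp add: sum.distrib)
qed

lemma XL: assumes "finite A" "low v" "rad v c r" "{c-r-1..c+r+1} \<subseteq> A"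
  shows "x * SS A v x = SS A (Jv v) x"
proof -
  have "SS A v x = SS {c-r..c+r} v x"
    using assms by (intro SS_rad[of _ _ v c r]) auto
  moreover have "SS A (Jv v) x = SS {c-r-1..c+r+1} (Jv v) x"
    using assms rad_J[OF assms(3)] by (intro SS_rad[of _ _ "Jv v" c "r+1"]) (auto simp: algebra_simps)
  ultimately show ?thesis using XL0[OF assms(2,3)] by simp
qed

lemma XLk: assumes "finite A" "low v" "rad v c r" "{c-r-int k..c+r+int k} \<subseteq> A"
  shows "x ^ k * SS A v x = SS A ((Jv ^^ k) v) x"
  using assms(4)
proof (induction k)
  case 0 then show ?case by simp
next
  case (Suc k)
  have "{c - r - int k..c + r + int k} \<subseteq> A" using Suc.prems by auto
  then have IH: "x ^ k * SS A v x = SS A ((Jv ^^ k) v) x" by (rule Suc.IH)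
  have "x * SS A ((Jv ^^ k) v) x = SS A (Jv ((Jv ^^ k) v)) x"
    using assms(1) low_Jp[OF assms(2)] rad_Jp[OF assms(3)] Suc.prems
    by (intro XL[where c=c and r="r + int k"]) (auto simp: algebra_simps)
  then show ?case using IH by (simp add: mult.assoc)
qed


definition V :: "nat \<Rightarrow> int \<Rightarrow> int \<Rightarrow> real" where
  "V j m = Dv ((Jv ^^ j) (ev m))"

lemma PP0: "PP 0 x = 1" by (simp add: PP_def)
lemma PP1: "PP 1 x = x - bi 0" using PP_rec[of 0 x] by (simp add: PP0 PP_def)
lemma PP2: "PP 2 x = (x - bi 1) * PP 1 x - ui 1 * PP 0 x" using PP_rec[of 1 x] by simp
lemma PP3: "PP 3 x = (x - bi 2) * PP 2 x - ui 2 * PP 1 x" using PP_rec[of 2 x] by simp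
lemma PP4: "PP 4 x = (x - bi 3) * PP 3 x - ui 3 * PP 2 x" using PP_rec[of 3 x] by simp

lemma base_sum: assumes "j \<le> 4" shows "SS {0-10..0+10} (V j 0) x = (\<Sum>i\<in>{0,1,2,3,4}. V j 0 i * PP i x)"
proof -
  have r: "rad (V j 0) 0 (0 + int j)" unfolding V_def by (intro rad_D rad_Jp rad_ev)
  have l: "low (V j 0)" unfolding V_def by (intro low_D low_Jp low_ev) simp
  have "SS {0-10..0+10} (V j 0) x = SS {0..4} (V j 0) x"
    using r l assms by (intro SS_eq[where C="{0..4}"]) (auto simp: rad_def low_def, force+)
  also have "{0..4::int} = {0,1,2,3,4}" by auto
  finally show ?thesis by (simp add: SS_def)
qed

lemma Hform: assumes "x \<notin> {1, -1, 3, -3}"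
  shows "hahnH N \<alpha> \<beta> f x * (4 * (x + 1) * (x - 1) * (x + 3) * (x - 3)) =
    (x + 3 - \<alpha> + \<beta>) * (x + 3 - (\<alpha> + \<beta>)) * (x - 1 - 2 * real N + (\<alpha> + \<beta>)) * (x - 1) * (x - 3) * (f (x + 4) - f x)
  - (x - 1 + (\<alpha> + \<beta>)) * (x - 1 + \<alpha> - \<beta>) * (x - 1 + 2 * real N - (\<alpha> + \<beta>)) * (x + 1) * (x + 3) * (f (x - 4) - f x)
  + 4 * (\<alpha>\<^sup>2 - \<beta>\<^sup>2) * (x + (\<alpha> + \<beta>) - 2 * real N - 1) * (x - 3) * (f (- x - 2) - f x)
  + 4 * (2 * real N + 2 - (\<alpha> + \<beta>)) * ((x + \<alpha> - 1)\<^sup>2 - \<beta>\<^sup>2) * (x + 3) * (f (- x + 2) - f x)" (is "_ = ?rhs")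
proof -
  have x: "x + 1 \<noteq> 0" "x - 1 \<noteq> 0" "x + 3 \<noteq> 0" "x - 3 \<noteq> 0"
    using assms by auto
  have x2: "x\<^sup>2 - 1 = (x + 1) * (x - 1)" by (simp add: power2_eq_square algebra_simps)
  have dm: "\<And>A B C. B \<noteq> 0 \<Longrightarrow> A / B * (B * C) = A * (C::real)" by simp
  have d1: "4 * (x + 1) * (x - 1) * (x + 3) * (x - 3) = (4 * (x + 1) * (x + 3)) * ((x - 1) * (x - 3))" by algebra
  have d2: "4 * (x + 1) * (x - 1) * (x + 3) * (x - 3) = (4 * (x - 1) * (x - 3)) * ((x + 1) * (x + 3))" by algebra
  have d3: "4 * (x + 1) * (x - 1) * (x + 3) * (x - 3) = ((x\<^sup>2 - 1) * (x + 3)) * (4 * (x - 3))" unfolding x2 by algebra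
  have d4: "4 * (x + 1) * (x - 1) * (x + 3) * (x - 3) = ((x\<^sup>2 - 1) * (x - 3)) * (4 * (x + 3))" unfolding x2 by algebra
  have n1: "4 * (x + 1) * (x + 3) \<noteq> 0" "4 * (x - 1) * (x - 3) \<noteq> 0"
    "(x\<^sup>2 - 1) * (x + 3) \<noteq> 0" "(x\<^sup>2 - 1) * (x - 3) \<noteq> 0" using x unfolding x2 by auto
  have e1: "E1 N \<alpha> \<beta> x * (4 * (x + 1) * (x - 1) * (x + 3) * (x - 3)) =
    (x + 3 - \<alpha> + \<beta>) * (x + 3 - (\<alpha> + \<beta>)) * (x - 1 - 2 * real N + (\<alpha> + \<beta>)) * (x - 1) * (x - 3)"
    unfolding E1_def d1 dm[OF n1(1)] by algebra
  have e2: "E2 N \<alpha> \<beta> x * (4 * (x + 1) * (x - 1) * (x + 3) * (x - 3)) =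
    - (x - 1 + (\<alpha> + \<beta>)) * (x - 1 + \<alpha> - \<beta>) * (x - 1 + 2 * real N - (\<alpha> + \<beta>)) * (x + 1) * (x + 3)"
    unfolding E2_def d2 minus_mult_left[symmetric] dm[OF n1(2)] by algebra
  have g1: "G1 N \<alpha> \<beta> x * (4 * (x + 1) * (x - 1) * (x + 3) * (x - 3)) =
    4 * (\<alpha>\<^sup>2 - \<beta>\<^sup>2) * (x + (\<alpha> + \<beta>) - 2 * real N - 1) * (x - 3)"
    unfolding G1_def d3 dm[OF n1(3)] by algebra
  have g2: "G2 N \<alpha> \<beta> x * (4 * (x + 1) * (x - 1) * (x + 3) * (x - 3)) =
    4 * (2 * real N + 2 - (\<alpha> + \<beta>)) * ((x + \<alpha> - 1)\<^sup>2 - \<beta>\<^sup>2) * (x + 3)"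
    unfolding G2_def d4 dm[OF n1(4)] by algebra
  let ?D = "4 * (x + 1) * (x - 1) * (x + 3) * (x - 3)"
  have "hahnH N \<alpha> \<beta> f x * ?D = (E1 N \<alpha> \<beta> x * ?D) * (f (x + 4) - f x) + (E2 N \<alpha> \<beta> x * ?D) * (f (x - 4) - f x)
     + (G1 N \<alpha> \<beta> x * ?D) * (f (- x - 2) - f x) + (G2 N \<alpha> \<beta> x * ?D) * (f (- x + 2) - f x)"
    unfolding hahnH_def by algebra
  also have "\<dots> = ?rhs" unfolding e1 e2 g1 g2 by algebra
  finally show ?thesis .
qed


lemma base_j: assumes "x \<notin> {1, -1, 3, -3}" "j \<le> 4"
  shows "hahnH N \<alpha> \<beta> (\<lambda>y. y ^ j * PP 0 y) x * (4 * (x + 1) * (x - 1) * (x + 3) * (x - 3))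
     = SS {0-10..0+10} (V j 0) x * (4 * (x + 1) * (x - 1) * (x + 3) * (x - 3))"
proof -
  have j: "j = 0 \<or> j = 1 \<or> j = 2 \<or> j = 3 \<or> j = 4" using assms(2) by auto
  show ?thesis
    unfolding Hform[OF assms(1)] base_sum[OF assms(2)]
    using j
    apply (elim disjE; hypsubst_thin)
        apply (simp_all add: PP0 PP1 PP2 PP3 PP4 V_def Dv_def Jv_def ev_def bi_def ui_def numeral_eq_Suc)
      apply algebra+
    done
qed

lemma base: assumes "x \<notin> {1, -1, 3, -3}" "j \<le> 4"
  shows "hahnH N \<alpha> \<beta> (\<lambda>y. y ^ j * PP 0 y) x = SS {0-10..0+10} (V j 0) x"
proof -
  have "4 * (x + 1) * (x - 1) * (x + 3) * (x - 3) \<noteq> 0" using assms(1) by auto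
  then show ?thesis using base_j[OF assms] by simp
qed


lemma Hlin3: "hahnH N \<alpha> \<beta> (\<lambda>y. f y - c * g y - d * h y) x
    = hahnH N \<alpha> \<beta> f x - c * hahnH N \<alpha> \<beta> g x - d * hahnH N \<alpha> \<beta> h x"
  unfolding hahnH_def by algebra

lemma OPREL: "hahnH N \<alpha> \<beta> (\<lambda>y. y ^ 5 * p y) x =
  - (64 * (x ^ 0 * hahnH N \<alpha> \<beta> (\<lambda>y. y ^ 1 * p y) x) - 20 * (x ^ 0 * hahnH N \<alpha> \<beta> (\<lambda>y. y ^ 3 * p y) x)
     - 64 * (x ^ 1 * hahnH N \<alpha> \<beta> (\<lambda>y. y ^ 0 * p y) x) - 4 * (x ^ 1 * hahnH N \<alpha> \<beta> (\<lambda>y. y ^ 2 * p y) x)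
     - (x ^ 1 * hahnH N \<alpha> \<beta> (\<lambda>y. y ^ 4 * p y) x)
     + 4 * (x ^ 2 * hahnH N \<alpha> \<beta> (\<lambda>y. y ^ 1 * p y) x) - 2 * (x ^ 2 * hahnH N \<alpha> \<beta> (\<lambda>y. y ^ 3 * p y) x)
     + 20 * (x ^ 3 * hahnH N \<alpha> \<beta> (\<lambda>y. y ^ 0 * p y) x) + 2 * (x ^ 3 * hahnH N \<alpha> \<beta> (\<lambda>y. y ^ 2 * p y) x)
     + (x ^ 4 * hahnH N \<alpha> \<beta> (\<lambda>y. y ^ 1 * p y) x) - (x ^ 5 * hahnH N \<alpha> \<beta> (\<lambda>y. y ^ 0 * p y) x))"
  unfolding hahnH_def by algebra

lemma MI': "V 5 m i =
  - (64 * (Jv ^^ 0) (V 1 m) i - 20 * (Jv ^^ 0) (V 3 m) i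
     - 64 * (Jv ^^ 1) (V 0 m) i - 4 * (Jv ^^ 1) (V 2 m) i - (Jv ^^ 1) (V 4 m) i
     + 4 * (Jv ^^ 2) (V 1 m) i - 2 * (Jv ^^ 2) (V 3 m) i
     + 20 * (Jv ^^ 3) (V 0 m) i + 2 * (Jv ^^ 3) (V 2 m) i
     + (Jv ^^ 4) (V 1 m) i - (Jv ^^ 5) (V 0 m) i)"
  using MI[of m i] unfolding FE_def V_def funpow_0 by linarith

lemma rad_V: "rad (V j m) m (int j)"
  unfolding V_def using rad_D[OF rad_Jp[OF rad_ev]] by simp

lemma low_V: "0 \<le> m \<Longrightarrow> low (V j m)"
  unfolding V_def by (intro low_D low_Jp low_ev)

lemma Jv_lin: "Jv (\<lambda>i. v i - c * w i - d * z i) = (\<lambda>i. Jv v i - c * Jv w i - d * Jv z i)"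
  unfolding Jv_def by (rule ext) algebra

lemma Jp_lin: "(Jv ^^ k) (\<lambda>i. v i - c * w i - d * z i) = (\<lambda>i. (Jv ^^ k) v i - c * (Jv ^^ k) w i - d * (Jv ^^ k) z i)"
proof (induction k)
  case 0 then show ?case by simp
next
  case (Suc k) then show ?case by (simp add: Jv_lin)
qed

lemma Dv_lin: "Dv (\<lambda>i. v i - c * w i - d * z i) = (\<lambda>i. Dv v i - c * Dv w i - d * Dv z i)"
  unfolding Dv_def by (rule ext) algebra

lemma e_rec: "ev (m + 1) = (\<lambda>i. Jv (ev m) i - bi m * ev m i - ui m * ev (m - 1) i)"
  by (rule ext) (auto simp: Jv_def ev_def)

lemma V_rec: "V j (m + 1) = (\<lambda>i. V (Suc j) m i - bi m * V j m i - ui m * V j (m - 1) i)"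
  unfolding V_def e_rec Jp_lin Dv_lin funpow_Suc_right o_apply ..

lemma SS_lin: "SS A (\<lambda>i. v i - c * w i - d * z i) x = SS A v x - c * SS A w x - d * SS A z x"
proof -
  have "(\<lambda>i. (v i - c * w i - d * z i) * PP i x) = (\<lambda>i. v i * PP i x - c * (w i * PP i x) - d * (z i * PP i x))"
    by (rule ext) algebra
  then show ?thesis unfolding SS_def by (simp only: sum_subtractf sum_distrib_left)
qed

definition St :: "int \<Rightarrow> real \<Rightarrow> bool" where
  "St m x \<longleftrightarrow> (\<forall>j\<le>4. hahnH N \<alpha> \<beta> (\<lambda>y. y ^ j * PP m y) x = SS {m-10..m+10} (V j m) x)"

lemma XT: assumes "0 \<le> m" "St m x" "a + b \<le> 5" "b \<le> 4"
  shows "x ^ a * hahnH N \<alpha> \<beta> (\<lambda>y. y ^ b * PP m y) x = SS {m-10..m+10} ((Jv ^^ a) (V b m)) x"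
proof -
  have "hahnH N \<alpha> \<beta> (\<lambda>y. y ^ b * PP m y) x = SS {m-10..m+10} (V b m) x"
    using assms(2,4) unfolding St_def by auto
  moreover have "x ^ a * SS {m-10..m+10} (V b m) x = SS {m-10..m+10} ((Jv ^^ a) (V b m)) x"
    using assms low_V rad_V by (intro XLk[where c=m and r="int b"]) auto
  ultimately show ?thesis by simp
qed

lemma K5: assumes "0 \<le> m" "St m x"
  shows "hahnH N \<alpha> \<beta> (\<lambda>y. y ^ 5 * PP m y) x = SS {m-10..m+10} (V 5 m) x"
proof -
  have t01: "x ^ 0 * hahnH N \<alpha> \<beta> (\<lambda>y. y ^ 1 * PP m y) x = SS {m-10..m+10} ((Jv ^^ 0) (V 1 m)) x"
    by (rule XT[OF assms]) simp_all
  have t03: "x ^ 0 * hahnH N \<alpha> \<beta> (\<lambda>y. y ^ 3 * PP m y) x = SS {m-10..m+10} ((Jv ^^ 0) (V 3 m)) x"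
    by (rule XT[OF assms]) simp_all
  have t10: "x ^ 1 * hahnH N \<alpha> \<beta> (\<lambda>y. y ^ 0 * PP m y) x = SS {m-10..m+10} ((Jv ^^ 1) (V 0 m)) x"
    by (rule XT[OF assms]) simp_all
  have t12: "x ^ 1 * hahnH N \<alpha> \<beta> (\<lambda>y. y ^ 2 * PP m y) x = SS {m-10..m+10} ((Jv ^^ 1) (V 2 m)) x"
    by (rule XT[OF assms]) simp_all
  have t14: "x ^ 1 * hahnH N \<alpha> \<beta> (\<lambda>y. y ^ 4 * PP m y) x = SS {m-10..m+10} ((Jv ^^ 1) (V 4 m)) x"
    by (rule XT[OF assms]) simp_all
  have t21: "x ^ 2 * hahnH N \<alpha> \<beta> (\<lambda>y. y ^ 1 * PP m y) x = SS {m-10..m+10} ((Jv ^^ 2) (V 1 m)) x"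
    by (rule XT[OF assms]) simp_all
  have t23: "x ^ 2 * hahnH N \<alpha> \<beta> (\<lambda>y. y ^ 3 * PP m y) x = SS {m-10..m+10} ((Jv ^^ 2) (V 3 m)) x"
    by (rule XT[OF assms]) simp_all
  have t30: "x ^ 3 * hahnH N \<alpha> \<beta> (\<lambda>y. y ^ 0 * PP m y) x = SS {m-10..m+10} ((Jv ^^ 3) (V 0 m)) x"
    by (rule XT[OF assms]) simp_all
  have t32: "x ^ 3 * hahnH N \<alpha> \<beta> (\<lambda>y. y ^ 2 * PP m y) x = SS {m-10..m+10} ((Jv ^^ 3) (V 2 m)) x"
    by (rule XT[OF assms]) simp_all
  have t41: "x ^ 4 * hahnH N \<alpha> \<beta> (\<lambda>y. y ^ 1 * PP m y) x = SS {m-10..m+10} ((Jv ^^ 4) (V 1 m)) x"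
    by (rule XT[OF assms]) simp_all
  have t50: "x ^ 5 * hahnH N \<alpha> \<beta> (\<lambda>y. y ^ 0 * PP m y) x = SS {m-10..m+10} ((Jv ^^ 5) (V 0 m)) x"
    by (rule XT[OF assms]) simp_all
  have E1: "hahnH N \<alpha> \<beta> (\<lambda>y. y ^ 5 * PP m y) x = - (64 * SS {m-10..m+10} ((Jv ^^ 0) (V 1 m)) x - 20 * SS {m-10..m+10} ((Jv ^^ 0) (V 3 m)) x
     - 64 * SS {m-10..m+10} ((Jv ^^ 1) (V 0 m)) x - 4 * SS {m-10..m+10} ((Jv ^^ 1) (V 2 m)) x - SS {m-10..m+10} ((Jv ^^ 1) (V 4 m)) x
     + 4 * SS {m-10..m+10} ((Jv ^^ 2) (V 1 m)) x - 2 * SS {m-10..m+10} ((Jv ^^ 2) (V 3 m)) x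
     + 20 * SS {m-10..m+10} ((Jv ^^ 3) (V 0 m)) x + 2 * SS {m-10..m+10} ((Jv ^^ 3) (V 2 m)) x
     + SS {m-10..m+10} ((Jv ^^ 4) (V 1 m)) x - SS {m-10..m+10} ((Jv ^^ 5) (V 0 m)) x)"
    unfolding OPREL t01 t03 t10 t12 t14 t21 t23 t30 t32 t41 t50 by (rule refl)
  have "SS {m-10..m+10} (V 5 m) x = SS {m-10..m+10} (\<lambda>i.
  - (64 * (Jv ^^ 0) (V 1 m) i - 20 * (Jv ^^ 0) (V 3 m) i
     - 64 * (Jv ^^ 1) (V 0 m) i - 4 * (Jv ^^ 1) (V 2 m) i - (Jv ^^ 1) (V 4 m) i
     + 4 * (Jv ^^ 2) (V 1 m) i - 2 * (Jv ^^ 2) (V 3 m) i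
     + 20 * (Jv ^^ 3) (V 0 m) i + 2 * (Jv ^^ 3) (V 2 m) i
     + (Jv ^^ 4) (V 1 m) i - (Jv ^^ 5) (V 0 m) i)) x"
    unfolding MI'[symmetric] ..
  also have "\<dots> = - (64 * SS {m-10..m+10} ((Jv ^^ 0) (V 1 m)) x - 20 * SS {m-10..m+10} ((Jv ^^ 0) (V 3 m)) x
     - 64 * SS {m-10..m+10} ((Jv ^^ 1) (V 0 m)) x - 4 * SS {m-10..m+10} ((Jv ^^ 1) (V 2 m)) x - SS {m-10..m+10} ((Jv ^^ 1) (V 4 m)) x
     + 4 * SS {m-10..m+10} ((Jv ^^ 2) (V 1 m)) x - 2 * SS {m-10..m+10} ((Jv ^^ 2) (V 3 m)) x
     + 20 * SS {m-10..m+10} ((Jv ^^ 3) (V 0 m)) x + 2 * SS {m-10..m+10} ((Jv ^^ 3) (V 2 m)) x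
     + SS {m-10..m+10} ((Jv ^^ 4) (V 1 m)) x - SS {m-10..m+10} ((Jv ^^ 5) (V 0 m)) x)"
    unfolding SS_def
    by (simp add: algebra_simps sum_subtractf sum.distrib sum_distrib_left sum_negf del: funpow.simps)
  finally show ?thesis unfolding E1 by simp
qed


lemma step: assumes m: "0 \<le> m" and S: "St m x" and S': "1 \<le> m \<Longrightarrow> St (m - 1) x"
  shows "St (m + 1) x"
  unfolding St_def
proof (intro allI impI)
  fix j :: nat assume j: "j \<le> 4"
  have A: "(\<lambda>y. y ^ j * PP (m + 1) y) = (\<lambda>y. y ^ Suc j * PP m y - bi m * (y ^ j * PP m y) - ui m * (y ^ j * PP (m - 1) y))"
    by (rule ext) (simp only: PP_rec[OF m] power_Suc, algebra)
  have B: "hahnH N \<alpha> \<beta> (\<lambda>y. y ^ Suc j * PP m y) x = SS {m-10..m+10} (V (Suc j) m) x"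
  proof (cases "j < 4")
    case True then have "Suc j \<le> 4" by simp
    then show ?thesis using S unfolding St_def by (simp del: power_Suc)
  next
    case False then have "j = 4" using j by simp
    then show ?thesis using K5[OF m S] by simp
  qed
  have C: "hahnH N \<alpha> \<beta> (\<lambda>y. y ^ j * PP m y) x = SS {m-10..m+10} (V j m) x"
    using S j unfolding St_def by auto
  have D: "ui m * hahnH N \<alpha> \<beta> (\<lambda>y. y ^ j * PP (m - 1) y) x = ui m * SS {m-1-10..m-1+10} (V j (m - 1)) x"
  proof (cases "m = 0")
    case True then show ?thesis by (simp add: ui0)
  next
    case False then have "1 \<le> m" using m by simp
    then show ?thesis using S' j unfolding St_def by auto
  qed
  have W1: "SS {m+1-10..m+1+10} (V (Suc j) m) x = SS {m-10..m+10} (V (Suc j) m) x"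
    using rad_V[of "Suc j" m] j by (intro SS_rad[where c=m and r="int (Suc j)"]) auto
  have W2: "SS {m+1-10..m+1+10} (V j m) x = SS {m-10..m+10} (V j m) x"
    using rad_V[of j m] j by (intro SS_rad[where c=m and r="int j"]) auto
  have W3: "SS {m+1-10..m+1+10} (V j (m - 1)) x = SS {m-1-10..m-1+10} (V j (m - 1)) x"
    using rad_V[of j "m - 1"] j by (intro SS_rad[where c="m - 1" and r="int j"]) auto
  show "hahnH N \<alpha> \<beta> (\<lambda>y. y ^ j * PP (m + 1) y) x = SS {m + 1 - 10..m + 1 + 10} (V j (m + 1)) x"
    unfolding A Hlin3 V_rec SS_lin W1 W2 W3 B C D ..
qed

lemma all_St: assumes "x \<notin> {1, -1, 3, -3}" shows "St (int n) x"
proof (induction n rule: less_induct)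
  case (less n)
  show ?case
  proof (cases n)
    case 0 then show ?thesis using base[OF assms] unfolding St_def by simp
  next
    case (Suc k)
    have S: "St (int k) x" using less Suc by simp
    have S': "St (int k - 1) x" if "1 \<le> int k"
    proof -
      have "St (int (k - 1)) x" using less Suc by simp
      then show ?thesis using that by (simp add: of_nat_diff)
    qed
    have "St (int k + 1) x" by (rule step) (use S S' in auto)
    then show ?thesis using Suc by (simp add: add.commute)
  qed
qed

lemma final: assumes "x \<notin> {1, -1, 3, -3}"
  shows "hahnH N \<alpha> \<beta> (poly (hahnP N \<alpha> \<beta> n)) x = 2 * real n * poly (hahnP N \<alpha> \<beta> n) x"
proof -
  have h: "hahnH N \<alpha> \<beta> (\<lambda>y. y ^ 0 * PP (int n) y) x = SS {int n-10..int n+10} (V 0 (int n)) x"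
    using all_St[OF assms, of n] unfolding St_def by blast
  have f: "(\<lambda>y. y ^ 0 * PP (int n) y) = poly (hahnP N \<alpha> \<beta> n)" by (rule ext) (simp add: PP_def)
  have g: "(\<lambda>i. V 0 (int n) i * PP i x) = (\<lambda>i. if i = int n then 2 * real n * poly (hahnP N \<alpha> \<beta> n) x else 0)"
    by (rule ext) (simp add: V_def Dv_def ev_def PP_def)
  have "SS {int n-10..int n+10} (V 0 (int n)) x = 2 * real n * poly (hahnP N \<alpha> \<beta> n) x"
    unfolding SS_def g by simp
  then show ?thesis using h f by simp
qed

end

theorem mainTheorem7:
  fixes N n :: nat and \<alpha> \<beta> x :: real
  assumes "N > 0" and "even N" and "n \<le> N"
    and "x \<notin> {1, -1, 3, -3}"
  shows "hahnH N \<alpha> \<beta> (poly (hahnP N \<alpha> \<beta> n)) x = 2 * real n * poly (hahnP N \<alpha> \<beta> n) x"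
  using hh.final[OF assms(4)] .

end
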